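(* For $b\in[0,1]$ and an integer $n\ge1$ define $b_n=\max\big(b,\tfrac{1}{n}\lceil (n-1)b\rceil\big)$. Then: (1) $b=b_n$ if and only if $\{nb\}\le b$; (2) $b\le b_n\le b+\tfrac1n$; (3) $\lfloor b\rfloor+\lceil (n-1)b_{n-1}\rceil\le nb_n$ for $n\ge1$.
   Context: $\{x\}=x-\lfloor x\rfloor$ denotes the fractional part of a real number $x$. *)

theory Defs
  imports Complex_Main
begin

definition bn :: "real \<Rightarrow> nat \<Rightarrow> real" where
  "bn b n = max b (of_int \<lceil>(real n - 1) * b\<rceil> / real n)"

end

theory Submission
  imports Defs
begin

lemma part1:
  fixes b :: real and n :: nat
  assumes "0 \<le> b" and "b \<le> 1" and "n \<ge> 1"
  shows "b = bn b n \<longleftrightarrow> frac (real n * b) \<le> b"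
proof -
  have np: "real n > 0" using assms by simp
  have "b = bn b n \<longleftrightarrow> of_int \<lceil>(real n - 1) * b\<rceil> / real n \<le> b"
    unfolding bn_def by auto
  also have "\<dots> \<longleftrightarrow> of_int \<lceil>(real n - 1) * b\<rceil> \<le> real n * b"
    using np by (simp add: divide_le_eq mult.commute)
  also have "\<dots> \<longleftrightarrow> frac (real n * b) \<le> b"
  proof -
    define m where "m = \<lfloor>real n * b\<rfloor>"
    define f where "f = frac (real n * b)"
    have nb: "real n * b = of_int m + f" unfolding m_def f_def frac_def by simp
    have f01: "0 \<le> f" "f < 1" unfolding f_def by (auto simp: frac_lt_1)
    have e: "(real n - 1) * b = of_int m + (f - b)" using nb by (simp add: algebra_simps)
    have "of_int \<lceil>(real n - 1) * b\<rceil> \<le> real n * b \<longleftrightarrow> \<lceil>(real n - 1) * b\<rceil> \<le> m"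
    proof
      assume "real_of_int \<lceil>(real n - 1) * b\<rceil> \<le> real n * b"
      then have "real_of_int \<lceil>(real n - 1) * b\<rceil> < of_int m + 1" using nb f01 by linarith
      then show "\<lceil>(real n - 1) * b\<rceil> \<le> m" by linarith
    next
      assume "\<lceil>(real n - 1) * b\<rceil> \<le> m"
      then show "real_of_int \<lceil>(real n - 1) * b\<rceil> \<le> real n * b" using nb f01 by linarith
    qed
    also have "\<dots> \<longleftrightarrow> (real n - 1) * b \<le> of_int m" by (simp add: ceiling_le_iff)
    also have "\<dots> \<longleftrightarrow> f \<le> b" using e by linarith
    finally show ?thesis unfolding f_def .
  qed
  finally show ?thesis .
qed

lemma part2:
  fixes b :: real and n :: nat
  assumes "0 \<le> b" and "b \<le> 1" and "n \<ge> 1"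
  shows "b \<le> bn b n \<and> bn b n \<le> b + 1 / real n"
proof -
  have np: "real n > 0" using assms by simp
  have "of_int \<lceil>(real n - 1) * b\<rceil> < (real n - 1) * b + 1" by linarith
  also have "\<dots> \<le> real n * b + 1" using assms by (simp add: algebra_simps)
  finally have "of_int \<lceil>(real n - 1) * b\<rceil> / real n \<le> (real n * b + 1) / real n"
    using np by (simp add: divide_right_mono)
  also have "\<dots> = b + 1 / real n" using np by (simp add: field_simps)
  finally show ?thesis unfolding bn_def using np by auto
qed

lemma nbn:
  fixes b :: real and m :: nat
  assumes "0 \<le> b" and "m \<ge> 1"
  shows "real m * bn b m = max (real m * b) (of_int \<lceil>(real m - 1) * b\<rceil>)"
  using assms unfolding bn_def by (simp add: max_mult_distrib_left)

lemma part3: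
  fixes b :: real and n :: nat
  assumes "0 \<le> b" and "b \<le> 1" and "n \<ge> 1"
  shows "real_of_int \<lfloor>b\<rfloor> + real_of_int \<lceil>(real n - 1) * bn b (n - 1)\<rceil> \<le> real n * bn b n"
proof (cases "n = 1")
  case True
  then show ?thesis using assms by (simp add: bn_def)
next
  case False
  then have n2: "n \<ge> 2" using assms by simp
  have rn: "real (n - 1) = real n - 1" using n2 by simp
  have A: "(real n - 1) * bn b (n - 1) = max ((real n - 1) * b) (of_int \<lceil>(real n - 2) * b\<rceil>)"
    using nbn[of b "n-1"] assms n2 rn by simp
  have "\<lceil>(real n - 2) * b\<rceil> \<le> \<lceil>(real n - 1) * b\<rceil>"
    using assms by (intro ceiling_mono) (simp add: algebra_simps)
  then have C: "\<lceil>(real n - 1) * bn b (n - 1)\<rceil> = \<lceil>(real n - 1) * b\<rceil>"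
    unfolding A by (simp add: max_def) linarith
  have B: "real n * bn b n = max (real n * b) (of_int \<lceil>(real n - 1) * b\<rceil>)"
    using nbn[of b n] assms by simp
  show ?thesis
  proof (cases "b < 1")
    case True
    then have "\<lfloor>b\<rfloor> = 0" using assms by (simp add: floor_eq_iff)
    then show ?thesis unfolding C B by simp
  next
    case False
    then have b1: "b = 1" using assms by simp
    have "\<lceil>(real n - 1) * b\<rceil> = int n - 1" using b1 n2 by simp
    then show ?thesis unfolding C B using b1 by simp
  qed
qed

theorem lemma1p1:
  fixes b :: real and n :: nat
  assumes "0 \<le> b" and "b \<le> 1" and "n \<ge> 1"
  shows "(b = bn b n \<longleftrightarrow> frac (real n * b) \<le> b)
    \<and> (b \<le> bn b n \<and> bn b n \<le> b + 1 / real n)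
    \<and> real_of_int \<lfloor>b\<rfloor> + real_of_int \<lceil>(real n - 1) * bn b (n - 1)\<rceil> \<le> real n * bn b n"
  using part1[OF assms] part2[OF assms] part3[OF assms] by blast

end
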